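(* Let $I\subset S=K[x_1,\dots,x_t]$ be an $\mathfrak m$-primary monomial ideal. Then $v(I)\le\operatorname{reg}(S/I)$.
   Context: $K$ is a field, $S$ is standard graded and $\mathfrak m=\langle x_1,\dots,x_t\rangle$. For a proper graded ideal $J$, the $v$-number is $v(J)=\min\{k\ge 0 : \exists f\in S_k,\ \mathcal P\in\operatorname{Ass}(S/J) \text{ with } (J:f)=\mathcal P\}$. $\operatorname{reg}$ denotes Castelnuovo–Mumford regularity: $\operatorname{reg}(M)=\max\{j-i : \beta_{i,j}(M)\ne 0\}$ for the graded Betti numbers $\beta_{i,j}$ of a finitely generated graded $S$-module $M$. *)

theory Defs
  imports Main "HOL.Vector_Spaces" "HOL-Library.Poly_Mapping" "HOL-Library.Function_Algebras"
begin

text \<open>The polynomial ring S = K[x_0,...,x_(t-1)] is represented inside the type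
  of finitely supported maps from exponent vectors (nat =>0 nat) to the field 'k,
  restricted to the carrier of polynomials only involving variables with index < t.\<close>

type_synonym 'k pol = "(nat \<Rightarrow>\<^sub>0 nat) \<Rightarrow>\<^sub>0 'k"

definition polys :: "nat \<Rightarrow> 'k::field pol set" where
  "polys t = {p::'k pol. \<forall>m \<in> Poly_Mapping.keys p. Poly_Mapping.keys m \<subseteq> {..<t}}"

definition monom_pol :: "(nat \<Rightarrow>\<^sub>0 nat) \<Rightarrow> 'k::field pol" where
  "monom_pol m = Poly_Mapping.single m 1"

definition xvar :: "nat \<Rightarrow> 'k::field pol" where
  "xvar i = monom_pol (Poly_Mapping.single i 1)"

definition mdeg :: "(nat \<Rightarrow>\<^sub>0 nat) \<Rightarrow> nat" where
  "mdeg m = (\<Sum>i\<in>Poly_Mapping.keys m. Poly_Mapping.lookup m i)"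

text \<open>p lies in S_k (the zero polynomial lies in every S_k).\<close>
definition homog :: "nat \<Rightarrow> 'k::field pol \<Rightarrow> bool" where
  "homog k p \<longleftrightarrow> (\<forall>m \<in> Poly_Mapping.keys p. mdeg m = k)"

definition is_ideal :: "nat \<Rightarrow> 'k::field pol set \<Rightarrow> bool" where
  "is_ideal t J \<longleftrightarrow> J \<subseteq> polys t \<and> 0 \<in> J \<and> (\<forall>a\<in>J. \<forall>b\<in>J. a + b \<in> J)
     \<and> (\<forall>a\<in>J. \<forall>r\<in>polys t. r * a \<in> J)"

definition ideal_gen :: "nat \<Rightarrow> 'k::field pol set \<Rightarrow> 'k pol set" where
  "ideal_gen t G = \<Inter>{J. is_ideal t J \<and> G \<subseteq> J}"

definition prime_ideal :: "nat \<Rightarrow> 'k::field pol set \<Rightarrow> bool" where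
  "prime_ideal t P \<longleftrightarrow> is_ideal t P \<and> P \<noteq> polys t \<and>
     (\<forall>a\<in>polys t. \<forall>b\<in>polys t. a * b \<in> P \<longrightarrow> a \<in> P \<or> b \<in> P)"

definition radical :: "nat \<Rightarrow> 'k::field pol set \<Rightarrow> 'k pol set" where
  "radical t J = {f \<in> polys t. \<exists>n. f ^ n \<in> J}"

definition primary_ideal :: "nat \<Rightarrow> 'k::field pol set \<Rightarrow> bool" where
  "primary_ideal t Q \<longleftrightarrow> is_ideal t Q \<and> Q \<noteq> polys t \<and>
     (\<forall>a\<in>polys t. \<forall>b\<in>polys t. a * b \<in> Q \<longrightarrow> a \<in> Q \<or> b \<in> radical t Q)"

definition max_ideal :: "nat \<Rightarrow> 'k::field pol set" where
  "max_ideal t = ideal_gen t (xvar ` {..<t})"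

definition m_primary :: "nat \<Rightarrow> 'k::field pol set \<Rightarrow> bool" where
  "m_primary t I \<longleftrightarrow> primary_ideal t I \<and> radical t I = max_ideal t"

definition monomial_ideal :: "nat \<Rightarrow> 'k::field pol set \<Rightarrow> bool" where
  "monomial_ideal t I \<longleftrightarrow> is_ideal t I \<and>
     (\<exists>G. G \<subseteq> {m. Poly_Mapping.keys m \<subseteq> {..<t}} \<and> I = ideal_gen t (monom_pol ` G))"

definition colon :: "nat \<Rightarrow> 'k::field pol set \<Rightarrow> 'k pol \<Rightarrow> 'k pol set" where
  "colon t J f = {g \<in> polys t. g * f \<in> J}"

definition ass :: "nat \<Rightarrow> 'k::field pol set \<Rightarrow> 'k pol set set" where
  "ass t J = {P. prime_ideal t P \<and> (\<exists>f\<in>polys t. colon t J f = P)}"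

definition v_number :: "nat \<Rightarrow> 'k::field pol set \<Rightarrow> nat" where
  "v_number t J = (LEAST k. \<exists>f \<in> polys t. homog k f \<and> (\<exists>P \<in> ass t J. colon t J f = P))"

text \<open>Koszul chains: maps from subsets F of {0..t-1} (basis e_F) to polynomials.\<close>
type_synonym 'k chain = "nat set \<Rightarrow> 'k pol"

definition kscale :: "'k::field \<Rightarrow> 'k chain \<Rightarrow> 'k chain" where
  "kscale c z = (\<lambda>F. Poly_Mapping.single 0 c * z F)"

definition chains :: "nat \<Rightarrow> nat \<Rightarrow> 'k::field chain set" where
  "chains t i = {z. \<forall>F. z F \<noteq> 0 \<longrightarrow> F \<subseteq> {..<t} \<and> card F = i \<and> z F \<in> polys t}"

text \<open>Chains homogeneous of total degree j, where deg(u e_F) = deg u + |F|.\<close>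
definition chains_deg :: "nat \<Rightarrow> nat \<Rightarrow> nat \<Rightarrow> 'k::field chain set" where
  "chains_deg t i j = {z \<in> chains t i. \<forall>F. z F \<noteq> 0 \<longrightarrow> i \<le> j \<and> homog (j - i) (z F)}"

text \<open>Koszul differential d(e_F) = sum over k in F of (-1)^(pos of k in F) x_k e_(F-{k}).\<close>
definition kdiff :: "nat \<Rightarrow> 'k::field chain \<Rightarrow> 'k chain" where
  "kdiff t z = (\<lambda>G. \<Sum>k\<in>{..<t} - G.
      (- 1) ^ card {l \<in> G. l < k} * xvar k * z (insert k G))"

text \<open>Cycles and boundaries of the Koszul complex K(x; S/I), computed in K(x; S) modulo I K(x; S).\<close>
definition koszul_cycles :: "nat \<Rightarrow> 'k::field pol set \<Rightarrow> nat \<Rightarrow> nat \<Rightarrow> 'k chain set" where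
  "koszul_cycles t I i j = {z \<in> chains_deg t i j. \<forall>G. kdiff t z G \<in> I}"

definition koszul_boundaries :: "nat \<Rightarrow> 'k::field pol set \<Rightarrow> nat \<Rightarrow> nat \<Rightarrow> 'k chain set" where
  "koszul_boundaries t I i j =
     {(\<lambda>F. kdiff t w F + y F) | w y. w \<in> chains_deg t (Suc i) j \<and> y \<in> chains_deg t i j
        \<and> (\<forall>F. y F \<in> I)}"

text \<open>beta_{i,j}(S/I) = dim_K Tor_i(K, S/I)_j = dim_K H_i(x; S/I)_j.\<close>
definition betti :: "nat \<Rightarrow> 'k::field pol set \<Rightarrow> nat \<Rightarrow> nat \<Rightarrow> nat" where
  "betti t I i j = vector_space.dim kscale (koszul_cycles t I i j)
                   - vector_space.dim kscale (koszul_boundaries t I i j)"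

definition reg_quot :: "nat \<Rightarrow> 'k::field pol set \<Rightarrow> int" where
  "reg_quot t I = Max {int j - int i | i j. betti t I i j \<noteq> 0}"

end

theory Submission
  imports Defs
begin


lemma kscale_vs: "vector_space (kscale :: 'k::field \<Rightarrow> 'k chain \<Rightarrow> 'k chain)"
  unfolding vector_space_def kscale_def
  by (auto simp: fun_eq_iff distrib_left distrib_right single_add mult_single mult.assoc)

interpretation ks: vector_space "kscale :: 'k::field \<Rightarrow> 'k chain \<Rightarrow> 'k chain"
  by (rule kscale_vs)

lemma dimL1:
  fixes C B W :: "'k::field chain set"
  assumes "B \<subseteq> ks.span W" "finite W" "C \<subseteq> ks.span B"
  shows "ks.dim C \<le> ks.dim B"
proof -
  obtain A where A: "A \<subseteq> B" "ks.independent A" "B \<subseteq> ks.span A" "card A = ks.dim B"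
    by (rule ks.basis_exists)
  have "finite A" using ks.independent_span_bound[OF assms(2) A(2)] A(1) assms(1) by auto
  have "ks.span B \<subseteq> ks.span A" using A(3) by (metis ks.span_minimal ks.subspace_span)
  then have "C \<subseteq> ks.span A" using assms(3) by auto
  then show ?thesis using ks.dim_le_card[OF _ \<open>finite A\<close>] A(4) by auto
qed

lemma dimL2:
  fixes C B W :: "'k::field chain set"
  assumes "B \<subseteq> ks.span W" "C \<subseteq> ks.span W" "finite W" "B \<subseteq> ks.span C"
    "z \<in> C" "z \<notin> ks.span B"
  shows "ks.dim B < ks.dim C"
proof -
  obtain A where A: "A \<subseteq> B" "ks.independent A" "B \<subseteq> ks.span A" "card A = ks.dim B"
    by (rule ks.basis_exists)
  have fA: "finite A" using ks.independent_span_bound[OF assms(3) A(2)] A(1) assms(1) by auto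
  obtain A' where A': "A' \<subseteq> C" "ks.independent A'" "C \<subseteq> ks.span A'" "card A' = ks.dim C"
    by (rule ks.basis_exists)
  have fA': "finite A'" using ks.independent_span_bound[OF assms(3) A'(2)] A'(1) assms(2) by auto
  have "ks.span A \<subseteq> ks.span B" using A(1) by (rule ks.span_mono)
  then have zA: "z \<notin> ks.span A" using assms(6) by auto
  then have zA2: "z \<notin> A" using ks.span_superset by blast
  have ind: "ks.independent (insert z A)" using ks.independent_insertI[OF zA A(2)] .
  have "ks.span C \<subseteq> ks.span A'" using A'(3) by (metis ks.span_minimal ks.subspace_span)
  moreover have "insert z A \<subseteq> ks.span C" using assms(4,5) A(1) ks.span_superset by blast
  ultimately have "insert z A \<subseteq> ks.span A'" by auto
  then have "card (insert z A) \<le> card A'" using ks.independent_span_bound[OF fA' ind] by auto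
  then show ?thesis using A(4) A'(4) zA2 fA by simp
qed



lemma polys_mult: assumes "p \<in> polys t" "q \<in> polys t" shows "p * q \<in> polys t"
proof -
  { fix m assume "m \<in> Poly_Mapping.keys (p*q)"
    then obtain a b where "m = a + b" "a \<in> Poly_Mapping.keys p" "b \<in> Poly_Mapping.keys q" using keys_mult by blast
    then have "Poly_Mapping.keys m \<subseteq> {..<t}" using assms keys_add[of a b] unfolding polys_def by blast }
  then show ?thesis unfolding polys_def by auto
qed

lemma polys_add: assumes "p \<in> polys t" "q \<in> polys t" shows "p + q \<in> polys t"
  using assms keys_add[of p q] unfolding polys_def by blast

lemma polys_zero[simp]: "0 \<in> polys t" unfolding polys_def by simp

lemma polys_sum: "(\<And>x. x \<in> A \<Longrightarrow> f x \<in> polys t) \<Longrightarrow> sum f A \<in> polys t"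
  by (induction A rule: infinite_finite_induct) (auto intro: polys_add)

lemma polys_single0[simp]: "Poly_Mapping.single 0 c \<in> polys t"
  unfolding polys_def by auto

lemma polys_one[simp]: "1 \<in> polys t"
  unfolding polys_def by auto

lemma polys_monom: "Poly_Mapping.keys m \<subseteq> {..<t} \<Longrightarrow> monom_pol m \<in> polys t"
  unfolding polys_def monom_pol_def by auto

lemma polys_xvar: "k < t \<Longrightarrow> xvar k \<in> polys t"
  unfolding xvar_def by (rule polys_monom) auto

lemma polys_uminus: "p \<in> polys t \<Longrightarrow> - p \<in> polys t"
  unfolding polys_def by (simp add: keys_minus)

lemma polys_pow: "p \<in> polys t \<Longrightarrow> p ^ n \<in> polys t"
  by (induction n) (auto intro: polys_mult)

lemma polys_neg1pow[simp]: "(- 1) ^ n \<in> polys t"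
  by (intro polys_pow polys_uminus polys_one)

lemma ideal_mult: "is_ideal t I \<Longrightarrow> a \<in> I \<Longrightarrow> r \<in> polys t \<Longrightarrow> r * a \<in> I"
  unfolding is_ideal_def by blast

lemma ideal_mult2: "is_ideal t I \<Longrightarrow> a \<in> I \<Longrightarrow> r \<in> polys t \<Longrightarrow> a * r \<in> I"
  using ideal_mult by (metis mult.commute)

lemma ideal_add: "is_ideal t I \<Longrightarrow> a \<in> I \<Longrightarrow> b \<in> I \<Longrightarrow> a + b \<in> I"
  unfolding is_ideal_def by blast

lemma ideal_sum: "is_ideal t I \<Longrightarrow> (\<And>x. x \<in> A \<Longrightarrow> f x \<in> I) \<Longrightarrow> sum f A \<in> I"
  by (induction A rule: infinite_finite_induct) (auto intro: ideal_add simp: is_ideal_def)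

lemma ideal_sub: "is_ideal t I \<Longrightarrow> I \<subseteq> polys t" unfolding is_ideal_def by blast

lemma ideal_one: "is_ideal t I \<Longrightarrow> 1 \<in> I \<Longrightarrow> I = polys t"
  using ideal_mult[of t I 1] ideal_sub by fastforce

lemma poly_expand: "p = (\<Sum>m\<in>Poly_Mapping.keys p. Poly_Mapping.single 0 (Poly_Mapping.lookup p m) * monom_pol m)"
proof (rule poly_mapping_eqI)
  fix k
  have "Poly_Mapping.lookup (\<Sum>m\<in>Poly_Mapping.keys p. Poly_Mapping.single 0 (Poly_Mapping.lookup p m) * monom_pol m) k
     = (\<Sum>m\<in>Poly_Mapping.keys p. Poly_Mapping.lookup (Poly_Mapping.single m (Poly_Mapping.lookup p m)) k)"
    by (simp add: lookup_sum monom_pol_def mult_single)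
  also have "\<dots> = (\<Sum>m\<in>Poly_Mapping.keys p. if m = k then Poly_Mapping.lookup p m else 0)"
    by (rule sum.cong) (auto simp: lookup_single when_def)
  also have "\<dots> = Poly_Mapping.lookup p k" by (auto simp: in_keys_iff)
  finally show "Poly_Mapping.lookup p k = Poly_Mapping.lookup (\<Sum>m\<in>Poly_Mapping.keys p. Poly_Mapping.single 0 (Poly_Mapping.lookup p m) * monom_pol m) k" ..
qed

lemma monom_add: "monom_pol (a + b) = (monom_pol a * monom_pol b :: 'k::field pol)"
  by (simp add: monom_pol_def mult_single)

lemma mdeg_sum: "Poly_Mapping.keys m \<subseteq> {..<t} \<Longrightarrow> mdeg m = (\<Sum>i<t. Poly_Mapping.lookup m i)"
  unfolding mdeg_def by (rule sum.mono_neutral_left) (auto simp: in_keys_iff)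

lemma mdeg_add: "mdeg (a + b) = mdeg a + mdeg b"
proof -
  let ?K = "Poly_Mapping.keys a \<union> Poly_Mapping.keys b"
  have "mdeg (a+b) = (\<Sum>i\<in>?K. Poly_Mapping.lookup (a+b) i)"
    unfolding mdeg_def by (rule sum.mono_neutral_left) (auto simp: in_keys_iff lookup_add)
  also have "\<dots> = (\<Sum>i\<in>?K. Poly_Mapping.lookup a i) + (\<Sum>i\<in>?K. Poly_Mapping.lookup b i)" by (simp add: lookup_add sum.distrib)
  also have "(\<Sum>i\<in>?K. Poly_Mapping.lookup a i) = mdeg a"
    unfolding mdeg_def by (rule sum.mono_neutral_right) (auto simp: in_keys_iff)
  also have "(\<Sum>i\<in>?K. Poly_Mapping.lookup b i) = mdeg b"
    unfolding mdeg_def by (rule sum.mono_neutral_right) (auto simp: in_keys_iff)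
  finally show ?thesis .
qed

lemma mdeg_single: "mdeg (Poly_Mapping.single k n) = n"
  unfolding mdeg_def by simp



lemma xvar_pow: "(xvar k :: 'k::field pol) ^ n = monom_pol (Poly_Mapping.single k n)"
proof (induction n)
  case 0 then show ?case by (simp add: monom_pol_def)
next
  case (Suc n)
  have "(xvar k :: 'k pol) ^ Suc n = xvar k * monom_pol (Poly_Mapping.single k n)" using Suc by simp
  also have "\<dots> = monom_pol (Poly_Mapping.single k 1 + Poly_Mapping.single k n)"
    by (simp add: xvar_def monom_add)
  finally show ?case by (simp add: single_add[symmetric])
qed

lemma gen_sub_ideal_gen: "G \<subseteq> ideal_gen t G"
  unfolding ideal_gen_def by blast

lemma ideal_gen_min: "is_ideal t J \<Longrightarrow> G \<subseteq> J \<Longrightarrow> ideal_gen t G \<subseteq> J"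
  unfolding ideal_gen_def by blast

lemma colon_ideal: assumes "is_ideal t I" "f \<in> polys t" shows "is_ideal t (colon t I f)"
  using assms unfolding is_ideal_def colon_def
  by (auto simp: distrib_right mult.assoc intro: polys_add polys_mult)

context
  fixes t :: nat and I :: "'k::field pol set"
  assumes mp: "m_primary t I"
begin

lemma I_prim: "primary_ideal t I" using mp by (simp add: m_primary_def)

lemma I_rad: "radical t I = max_ideal t" using mp by (simp add: m_primary_def)

lemma I_ideal: "is_ideal t I" using I_prim by (simp add: primary_ideal_def)

lemma I_ne: "I \<noteq> polys t" using I_prim by (simp add: primary_ideal_def)

lemma I_pr: "a \<in> polys t \<Longrightarrow> b \<in> polys t \<Longrightarrow> a * b \<in> I \<Longrightarrow> a \<in> I \<or> b \<in> radical t I"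
  using I_prim unfolding primary_ideal_def by blast

lemma one_notin: "1 \<notin> I" using I_ne ideal_one[OF I_ideal] by blast

lemma xvar_rad: "k < t \<Longrightarrow> \<exists>n. xvar k ^ n \<in> I"
proof -
  assume "k < t"
  then have "xvar k \<in> xvar ` {..<t}" by simp
  then have "xvar k \<in> max_ideal t" unfolding max_ideal_def using gen_sub_ideal_gen[of "xvar ` {..<t}" t] by (rule subsetD[rotated])
  then have "xvar k \<in> radical t I" using I_rad by simp
  then show ?thesis by (simp add: radical_def)
qed

definition nk :: "nat \<Rightarrow> nat" where "nk k = (SOME n. xvar k ^ n \<in> I)"

lemma nk: "k < t \<Longrightarrow> monom_pol (Poly_Mapping.single k (nk k)) \<in> I"
  using someI_ex[OF xvar_rad] unfolding nk_def xvar_pow by metis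

definition NN :: nat where "NN = (\<Sum>k<t. nk k) + 1"

lemma monom_big:
  assumes "Poly_Mapping.keys m \<subseteq> {..<t}" "k < t" "Poly_Mapping.lookup m k \<ge> nk k"
  shows "monom_pol m \<in> I"
proof -
  define m' where "m' = m - Poly_Mapping.single k (nk k)"
  have eq: "m = m' + Poly_Mapping.single k (nk k)"
    by (rule poly_mapping_eqI) (use assms(3) in \<open>auto simp: m'_def lookup_add lookup_minus lookup_single when_def\<close>)
  have "Poly_Mapping.keys m' \<subseteq> Poly_Mapping.keys m"
    by (auto simp: m'_def in_keys_iff lookup_minus)
  then have "Poly_Mapping.keys m' \<subseteq> {..<t}" using assms(1) by blast
  then have "monom_pol m' \<in> polys t" by (rule polys_monom)
  then have "monom_pol m' * monom_pol (Poly_Mapping.single k (nk k)) \<in> I"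
    using ideal_mult[OF I_ideal nk[OF assms(2)]] by blast
  then show ?thesis using eq by (simp add: monom_add)
qed

lemma monom_notin_deg:
  assumes "Poly_Mapping.keys m \<subseteq> {..<t}" "monom_pol m \<notin> I"
  shows "mdeg m < NN"
proof -
  have "\<forall>k<t. Poly_Mapping.lookup m k \<le> nk k"
    using monom_big[OF assms(1)] assms(2) by (meson not_le less_imp_le)
  then have "(\<Sum>k<t. Poly_Mapping.lookup m k) \<le> (\<Sum>k<t. nk k)" by (intro sum_mono) auto
  then show ?thesis using mdeg_sum[OF assms(1)] unfolding NN_def by simp
qed

lemma homog_big:
  assumes "p \<in> polys t" "homog d p" "d \<ge> NN"
  shows "p \<in> I"
proof -
  have "(\<Sum>m\<in>Poly_Mapping.keys p. Poly_Mapping.single 0 (Poly_Mapping.lookup p m) * monom_pol m) \<in> I"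
  proof (rule ideal_sum[OF I_ideal])
    fix m assume m: "m \<in> Poly_Mapping.keys p"
    then have k: "Poly_Mapping.keys m \<subseteq> {..<t}" using assms(1) unfolding polys_def by blast
    have "mdeg m = d" using m assms(2) unfolding homog_def by blast
    then have "monom_pol m \<in> I" using monom_notin_deg[OF k] assms(3) by fastforce
    then show "Poly_Mapping.single 0 (Poly_Mapping.lookup p m) * monom_pol m \<in> I"
      by (rule ideal_mult[OF I_ideal]) simp
  qed
  then show ?thesis by (simp only: poly_expand[of p, symmetric])
qed

lemma socle_monom:
  obtains m0 where "Poly_Mapping.keys m0 \<subseteq> {..<t}" "monom_pol m0 \<notin> I"
    "\<And>k. k < t \<Longrightarrow> xvar k * monom_pol m0 \<in> I"
proof -
  define M where "M = {m. Poly_Mapping.keys m \<subseteq> {..<t} \<and> monom_pol m \<notin> I}"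
  have "0 \<in> M" unfolding M_def using one_notin by (simp add: monom_pol_def)
  have fin: "finite (mdeg ` M)" by (rule finite_subset[of _ "{..<NN}"]) (auto simp: M_def monom_notin_deg)
  have "Max (mdeg ` M) \<in> mdeg ` M" using fin \<open>0 \<in> M\<close> by (intro Max_in) auto
  then obtain m0 where m0: "m0 \<in> M" "mdeg m0 = Max (mdeg ` M)" by auto
  show ?thesis
  proof
    show "Poly_Mapping.keys m0 \<subseteq> {..<t}" "monom_pol m0 \<notin> I" using m0 unfolding M_def by auto
    fix k assume "k < t"
    let ?m = "Poly_Mapping.single k 1 + m0"
    have "mdeg ?m = mdeg m0 + 1" by (simp add: mdeg_add mdeg_single)
    then have "mdeg ?m \<notin> mdeg ` M" using m0(2) fin Max_ge by fastforce
    moreover have "Poly_Mapping.keys ?m \<subseteq> {..<t}" using keys_add[of "Poly_Mapping.single k (1::nat)" m0]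
      \<open>k < t\<close> \<open>Poly_Mapping.keys m0 \<subseteq> {..<t}\<close> by auto
    ultimately have "monom_pol ?m \<in> I" unfolding M_def by blast
    then show "xvar k * monom_pol m0 \<in> I" by (simp add: monom_add xvar_def)
  qed
qed

lemma colon_socle:
  assumes f: "f \<in> polys t" "f \<notin> I" "\<And>k. k < t \<Longrightarrow> xvar k * f \<in> I"
  shows "colon t I f \<in> ass t I"
proof -
  have ci: "is_ideal t (colon t I f)" by (rule colon_ideal[OF I_ideal f(1)])
  have "max_ideal t \<subseteq> colon t I f" unfolding max_ideal_def
    by (rule ideal_gen_min[OF ci]) (auto simp: colon_def polys_xvar f(3))
  moreover have "colon t I f \<subseteq> radical t I"
  proof
    fix g assume "g \<in> colon t I f"
    then have "g \<in> polys t" "f * g \<in> I" unfolding colon_def by (auto simp: mult.commute)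
    then show "g \<in> radical t I" using I_pr f by blast
  qed
  ultimately have eq: "colon t I f = radical t I" using I_rad by auto
  have ne: "colon t I f \<noteq> polys t"
  proof
    assume "colon t I f = polys t"
    then have "1 \<in> colon t I f" by simp
    then show False using f(2) unfolding colon_def by simp
  qed
  have pr: "\<forall>a\<in>polys t. \<forall>b\<in>polys t. a * b \<in> colon t I f \<longrightarrow> a \<in> colon t I f \<or> b \<in> colon t I f"
  proof (intro ballI impI)
    fix a b assume ab: "a \<in> polys t" "b \<in> polys t" "a * b \<in> colon t I f"
    then obtain n where "(a*b)^n \<in> I" unfolding eq radical_def by blast
    then have "a^n * b^n \<in> I" by (simp add: power_mult_distrib)
    then have "a^n \<in> I \<or> b^n \<in> radical t I" using I_pr ab polys_pow by blast
    then show "a \<in> colon t I f \<or> b \<in> colon t I f"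
    proof
      assume "a^n \<in> I" then show ?thesis unfolding eq radical_def using ab by blast
    next
      assume "b^n \<in> radical t I"
      then obtain m where "(b^n)^m \<in> I" unfolding radical_def by blast
      then have "b^(n*m) \<in> I" by (simp add: power_mult)
      then show ?thesis unfolding eq radical_def using ab by blast
    qed
  qed
  have "prime_ideal t (colon t I f)" unfolding prime_ideal_def using ci ne pr by blast
  then show ?thesis unfolding ass_def using f(1) by blast
qed

lemma v_bound:
  obtains m0 where "Poly_Mapping.keys m0 \<subseteq> {..<t}" "monom_pol m0 \<notin> I"
    "\<And>k. k < t \<Longrightarrow> xvar k * monom_pol m0 \<in> I" "v_number t I \<le> mdeg m0"
proof -
  obtain m0 where m0: "Poly_Mapping.keys m0 \<subseteq> {..<t}" "monom_pol m0 \<notin> I"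
    "\<And>k. k < t \<Longrightarrow> xvar k * monom_pol m0 \<in> I" using socle_monom by blast
  have p: "monom_pol m0 \<in> polys t" using m0(1) by (rule polys_monom)
  have h: "homog (mdeg m0) (monom_pol m0 :: 'k pol)" unfolding homog_def monom_pol_def by simp
  have "colon t I (monom_pol m0) \<in> ass t I" using colon_socle[OF p m0(2,3)] by blast
  then have "v_number t I \<le> mdeg m0" unfolding v_number_def using p h by (intro Least_le) blast
  then show ?thesis using m0 that by blast
qed

end


definition bch :: "nat set \<Rightarrow> (nat \<Rightarrow>\<^sub>0 nat) \<Rightarrow> 'k::field chain" where
  "bch F m = (\<lambda>G. if G = F then monom_pol m else 0)"

definition Wset :: "nat \<Rightarrow> nat \<Rightarrow> nat \<Rightarrow> 'k::field chain set" where
  "Wset t i j = (\<lambda>(F,m). bch F m) ` (Pow {..<t} \<times> {m. Poly_Mapping.keys m \<subseteq> {..<t} \<and> mdeg m = j - i})"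

lemma lookup_le_mdeg: "Poly_Mapping.lookup m x \<le> mdeg m"
proof (cases "x \<in> Poly_Mapping.keys m")
  case True then show ?thesis unfolding mdeg_def by (intro member_le_sum) auto
next
  case False then show ?thesis by (simp add: in_keys_iff)
qed

lemma finite_monos: "finite {m :: nat \<Rightarrow>\<^sub>0 nat. Poly_Mapping.keys m \<subseteq> {..<t} \<and> mdeg m = d}"
proof -
  let ?M = "{m :: nat \<Rightarrow>\<^sub>0 nat. Poly_Mapping.keys m \<subseteq> {..<t} \<and> mdeg m = d}"
  have "Poly_Mapping.lookup ` ?M \<subseteq> {f. \<forall>x. (x \<in> {..<t} \<longrightarrow> f x \<in> {..d}) \<and> (x \<notin> {..<t} \<longrightarrow> f x = 0)}"
  proof (clarsimp)
    fix m :: "nat \<Rightarrow>\<^sub>0 nat" and x assume "Poly_Mapping.keys m \<subseteq> {..<t}"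
    then show "(x < t \<longrightarrow> Poly_Mapping.lookup m x \<le> mdeg m) \<and> (\<not> x < t \<longrightarrow> Poly_Mapping.lookup m x = 0)"
      using lookup_le_mdeg[of m x] by (auto simp: in_keys_iff)
  qed
  then have "finite (Poly_Mapping.lookup ` ?M)"
    by (rule finite_subset) (intro finite_set_of_finite_funs; simp)
  moreover have "inj_on Poly_Mapping.lookup ?M" unfolding inj_on_def by (simp add: poly_mapping.lookup_inject)
  ultimately show ?thesis using finite_imageD by blast
qed

lemma finite_Wset: "finite (Wset t i j)"
  unfolding Wset_def by (intro finite_imageI finite_cartesian_product finite_monos) auto

lemma sum_fun_apply': "(sum f A) x = sum (\<lambda>a. f a x) A"
  by (induction A rule: infinite_finite_induct) auto

lemma chains_deg_span: "chains_deg t i j \<subseteq> ks.span (Wset t i j :: 'k::field chain set)"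
proof
  fix z :: "'k chain" assume z: "z \<in> chains_deg t i j"
  let ?S = "(\<Sum>F\<in>Pow {..<t}. \<Sum>m\<in>Poly_Mapping.keys (z F). kscale (Poly_Mapping.lookup (z F) m) (bch F m)) :: 'k chain"
  have "?S \<in> ks.span (Wset t i j)"
  proof (intro ks.span_sum ks.span_scale ks.span_base)
    fix F m assume F: "F \<in> Pow {..<t}" and m: "m \<in> Poly_Mapping.keys (z F)"
    then have "z F \<noteq> 0" by auto
    then have "z F \<in> polys t" "homog (j - i) (z F)" using z unfolding chains_deg_def chains_def by auto
    then have "Poly_Mapping.keys m \<subseteq> {..<t}" "mdeg m = j - i" using m unfolding polys_def homog_def by auto
    then show "bch F m \<in> Wset t i j" unfolding Wset_def using F by force
  qed
  moreover have "?S = z"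
  proof
    fix G
    have "?S G = (\<Sum>F\<in>Pow {..<t}. \<Sum>m\<in>Poly_Mapping.keys (z F).
        (if G = F then Poly_Mapping.single 0 (Poly_Mapping.lookup (z F) m) * monom_pol m else 0))"
      by (auto simp: sum_fun_apply' kscale_def bch_def intro!: sum.cong)
    also have "\<dots> = (\<Sum>F\<in>Pow {..<t}. if G = F then (\<Sum>m\<in>Poly_Mapping.keys (z F).
        Poly_Mapping.single 0 (Poly_Mapping.lookup (z F) m) * monom_pol m) else 0)"
      by (rule sum.cong) auto
    also have "\<dots> = (if G \<in> Pow {..<t} then (\<Sum>m\<in>Poly_Mapping.keys (z G).
        Poly_Mapping.single 0 (Poly_Mapping.lookup (z G) m) * monom_pol m) else 0)"
      by (simp add: sum.delta)
    also have "\<dots> = z G"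
    proof (cases "G \<in> Pow {..<t}")
      case True then show ?thesis by (simp only: if_True poly_expand[of "z G", symmetric])
    next
      case False then have "z G = 0" using z unfolding chains_deg_def chains_def by auto
      then show ?thesis using False by simp
    qed
    finally show "?S G = z G" .
  qed
  ultimately show "z \<in> ks.span (Wset t i j)" by simp
qed

lemma kdiff_add: "kdiff t (a + b) = kdiff t a + kdiff t b"
  by (rule ext) (simp add: kdiff_def distrib_left sum.distrib)

lemma kdiff_zero: "kdiff t 0 = 0"
  by (rule ext) (simp add: kdiff_def)

lemma kdiff_scale: "kdiff t (kscale c a) = kscale c (kdiff t a)"
  by (rule ext) (simp add: kdiff_def kscale_def sum_distrib_left mult.left_commute)

lemma kdiff_span: "kdiff t ` ks.span X \<subseteq> ks.span (kdiff t ` X)"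
proof -
  have "ks.span X \<subseteq> {w. kdiff t w \<in> ks.span (kdiff t ` X)}"
  proof (rule ks.span_minimal)
    show "X \<subseteq> {w. kdiff t w \<in> ks.span (kdiff t ` X)}" by (auto intro: ks.span_base)
    show "ks.subspace {w. kdiff t w \<in> ks.span (kdiff t ` X)}"
      unfolding ks.subspace_def
      by (auto simp: kdiff_add kdiff_zero kdiff_scale intro: ks.span_add ks.span_scale ks.span_zero)
  qed
  then show ?thesis by auto
qed

lemma kdiff_in:
  assumes "is_ideal t I" "\<And>k. k \<in> {..<t} - G \<Longrightarrow> xvar k * z (insert k G) \<in> I"
  shows "kdiff t z G \<in> I"
  unfolding kdiff_def
proof (rule ideal_sum[OF assms(1)])
  fix k assume "k \<in> {..<t} - G"
  then have "(- 1) ^ card {l \<in> G. l < k} * (xvar k * z (insert k G)) \<in> I"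
    by (intro ideal_mult[OF assms(1)] assms(2)) auto
  then show "(- 1) ^ card {l \<in> G. l < k} * xvar k * z (insert k G) \<in> I" by (simp add: mult.assoc)
qed

lemma cyc_bd_span:
  "koszul_cycles t I i j \<union> koszul_boundaries t I i j \<subseteq>
     ks.span (Wset t i j \<union> kdiff t ` Wset t (Suc i) j :: 'k::field chain set)"
proof -
  let ?X = "Wset t i j \<union> kdiff t ` Wset t (Suc i) j :: 'k chain set"
  have c: "chains_deg t i j \<subseteq> ks.span ?X"
    using chains_deg_span[of t i j] ks.span_mono[of "Wset t i j" ?X] by auto
  have "kdiff t ` chains_deg t (Suc i) j \<subseteq> ks.span ?X"
  proof -
    have "kdiff t ` chains_deg t (Suc i) j \<subseteq> kdiff t ` ks.span (Wset t (Suc i) j)"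
      using chains_deg_span by blast
    also have "\<dots> \<subseteq> ks.span (kdiff t ` Wset t (Suc i) j)" by (rule kdiff_span)
    also have "\<dots> \<subseteq> ks.span ?X" by (rule ks.span_mono) auto
    finally show ?thesis .
  qed
  then have "koszul_boundaries t I i j \<subseteq> ks.span ?X"
    using c unfolding koszul_boundaries_def
    by (auto intro!: ks.span_add[of "kdiff t _" ?X, unfolded plus_fun_def])
  moreover have "koszul_cycles t I i j \<subseteq> ks.span ?X" using c unfolding koszul_cycles_def by auto
  ultimately show ?thesis by blast
qed

lemma finite_X: "finite (Wset t i j \<union> kdiff t ` Wset t (Suc i) j :: 'k::field chain set)"
  by (simp add: finite_Wset)

lemma betti_zero:
  assumes "koszul_cycles t I i j \<subseteq> koszul_boundaries t I i j"
  shows "betti t (I :: 'k::field pol set) i j = 0"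
proof -
  have "ks.dim (koszul_cycles t I i j) \<le> ks.dim (koszul_boundaries t I i j)"
    using dimL1[OF _ finite_X, of "koszul_boundaries t I i j" t i j "koszul_cycles t I i j"]
      cyc_bd_span[of t I i j] assms ks.span_superset by blast
  then show ?thesis unfolding betti_def by simp
qed

lemma betti_pos:
  assumes "koszul_boundaries t I i j \<subseteq> koszul_cycles t I i j" "z \<in> koszul_cycles t I i j"
    "z \<notin> ks.span (koszul_boundaries t I i j)"
  shows "betti t (I :: 'k::field pol set) i j \<noteq> 0"
proof -
  have "ks.dim (koszul_boundaries t I i j) < ks.dim (koszul_cycles t I i j)"
    using dimL2[OF _ _ finite_X, of "koszul_boundaries t I i j" t i j "koszul_cycles t I i j" z]
      cyc_bd_span[of t I i j] assms ks.span_superset by blast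
  then show ?thesis unfolding betti_def by simp
qed



lemma zero_chain_deg: "0 \<in> chains_deg t i j"
  unfolding chains_deg_def chains_def by simp

context
  fixes t :: nat and I :: "'k::field pol set"
  assumes mp: "m_primary t I"
begin

lemma betti_nz:
  assumes "betti t I i j \<noteq> 0"
  shows "i \<le> j \<and> j - i < NN t I"
proof (rule ccontr)
  assume "\<not> (i \<le> j \<and> j - i < NN t I)"
  then have c: "j < i \<or> (i \<le> j \<and> NN t I \<le> j - i)" by auto
  have "koszul_cycles t I i j \<subseteq> koszul_boundaries t I i j"
  proof
    fix z assume z: "z \<in> koszul_cycles t I i j"
    then have zc: "z \<in> chains_deg t i j" unfolding koszul_cycles_def by auto
    have zI: "z F \<in> I" for F
    proof (cases "z F = 0")
      case True then show ?thesis using I_ideal[OF mp] unfolding is_ideal_def by simp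
    next
      case False
      then have "z F \<in> polys t" "i \<le> j" "homog (j - i) (z F)"
        using zc unfolding chains_deg_def chains_def by auto
      then show ?thesis using c homog_big[OF mp] by auto
    qed
    have "z = (\<lambda>F. kdiff t 0 F + z F)" by (simp add: kdiff_zero)
    then show "z \<in> koszul_boundaries t I i j" unfolding koszul_boundaries_def
      using zc zI zero_chain_deg by blast
  qed
  then have "betti t I i j = 0" by (rule betti_zero)
  then show False using assms by simp
qed

lemma finite_betti_set: "finite {int j - int i | i j. betti t I i j \<noteq> 0}"
proof (rule finite_subset)
  show "{int j - int i | i j. betti t I i j \<noteq> 0} \<subseteq> int ` {..<NN t I}"
  proof
    fix x assume "x \<in> {int j - int i | i j. betti t I i j \<noteq> 0}"
    then obtain i j where x: "x = int j - int i" "betti t I i j \<noteq> 0" by blast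
    from x(2) have "i \<le> j \<and> j - i < NN t I" by (rule betti_nz)
    then show "x \<in> int ` {..<NN t I}" unfolding x(1)
      by (intro image_eqI[of _ _ "j - i"]) auto
  qed
qed simp

lemma betti_top:
  assumes m0: "Poly_Mapping.keys m0 \<subseteq> {..<t}" "monom_pol m0 \<notin> I"
    "\<And>k. k < t \<Longrightarrow> xvar k * monom_pol m0 \<in> I"
  shows "betti t I t (mdeg m0 + t) \<noteq> 0"
proof -
  let ?j = "mdeg m0 + t"
  let ?f = "monom_pol m0 :: 'k pol"
  define z0 where "z0 = (\<lambda>G. if G = {..<t} then ?f else 0)"
  have II: "is_ideal t I" by (rule I_ideal[OF mp])
  have fp: "?f \<in> polys t" using m0(1) by (rule polys_monom)
  have hf: "homog (mdeg m0) ?f" unfolding homog_def monom_pol_def by simp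
  have z0c: "z0 \<in> chains_deg t t ?j"
    unfolding chains_deg_def chains_def z0_def using fp hf by auto
  have "kdiff t z0 G \<in> I" for G
  proof (rule kdiff_in[OF II])
    fix k assume k: "k \<in> {..<t} - G"
    show "xvar k * z0 (insert k G) \<in> I"
    proof (cases "insert k G = {..<t}")
      case True then show ?thesis using m0(3) k by (simp add: z0_def)
    next
      case False then show ?thesis using II unfolding is_ideal_def by (simp add: z0_def)
    qed
  qed
  then have z0C: "z0 \<in> koszul_cycles t I t ?j" unfolding koszul_cycles_def using z0c by blast
  have w0: "w = 0" if "w \<in> chains_deg t (Suc t) ?j" for w :: "'k chain"
  proof
    fix F
    show "w F = 0 F"
    proof (rule ccontr)
      assume "w F \<noteq> 0 F"
      then have "F \<subseteq> {..<t}" "card F = Suc t" using that unfolding chains_deg_def chains_def by auto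
      then show False using card_mono[of "{..<t}" F] by auto
    qed
  qed
  have BC: "koszul_boundaries t I t ?j \<subseteq> koszul_cycles t I t ?j"
  proof
    fix b assume "b \<in> koszul_boundaries t I t ?j"
    then obtain w y where b: "b = (\<lambda>F. kdiff t w F + y F)" "w \<in> chains_deg t (Suc t) ?j"
      "y \<in> chains_deg t t ?j" "\<forall>F. y F \<in> I" unfolding koszul_boundaries_def by blast
    have "w = 0" using w0 b(2) by blast
    then have "b = y" using b(1) by (simp add: kdiff_zero)
    moreover have "kdiff t y G \<in> I" for G
      by (rule kdiff_in[OF II]) (use b(4) in \<open>auto intro: ideal_mult[OF II] polys_xvar\<close>)
    ultimately show "b \<in> koszul_cycles t I t ?j" unfolding koszul_cycles_def using b(3) by blast
  qed
  have "ks.span (koszul_boundaries t I t ?j) \<subseteq> {z. z {..<t} \<in> I}"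
  proof (rule ks.span_minimal)
    show "koszul_boundaries t I t ?j \<subseteq> {z. z {..<t} \<in> I}"
      unfolding koszul_boundaries_def by (auto simp: kdiff_def)
    show "ks.subspace {z :: 'k chain. z {..<t} \<in> I}"
      unfolding ks.subspace_def kscale_def using II unfolding is_ideal_def by auto
  qed
  moreover have "z0 {..<t} \<notin> I" using m0(2) by (simp add: z0_def)
  ultimately have "z0 \<notin> ks.span (koszul_boundaries t I t ?j)" by blast
  then show ?thesis using betti_pos[OF BC z0C] by blast
qed

end

theorem theorem4p19:
  fixes t :: nat and I :: "'k::field pol set"
  assumes "monomial_ideal t I"
    and "m_primary t I"
  shows "int (v_number t I) \<le> reg_quot t I"
proof -
  obtain m0 where m0: "Poly_Mapping.keys m0 \<subseteq> {..<t}" "monom_pol m0 \<notin> I"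
    "\<And>k. k < t \<Longrightarrow> xvar k * monom_pol m0 \<in> I" "v_number t I \<le> mdeg m0"
    using v_bound[OF assms(2)] by blast
  have "betti t I t (mdeg m0 + t) \<noteq> 0" by (rule betti_top[OF assms(2) m0(1-3)])
  then have "int (mdeg m0 + t) - int t \<in> {int j - int i | i j. betti t I i j \<noteq> 0}" by blast
  then have "int (mdeg m0 + t) - int t \<le> reg_quot t I"
    unfolding reg_quot_def using finite_betti_set[OF assms(2)] by (intro Max_ge)
  then show ?thesis using m0(4) by simp
qed


end
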